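(* Suppose $(\mathcal A,s,D,\{v_i\})$ satisfies condition (1) of $c$-efficiency and each $v_i$ is subadditive over independent items. For a bidder $i$ and a constant $l_i\ge0$, let $L_i(t_i)=\{j:V_i(t_{ij})<l_i\}$ and $\hat\mu_i^{(s)}(t_i,S)=\mu_i^{(s)}(t_i,S\cap L_i(t_i))$. Then $\hat\mu_i^{(s)}(\cdot,\cdot)$ is monotone, subadditive, has no externalities, and is $l_i$-Lipschitz.
   Context: Types $t_i=(t_{ij})_j$, $t_{ij}\sim D_{ij}$ independent. For a function $g(t_i,S)$: no externalities = $g(t_i,S)=g(t_i',S)$ whenever $t_{ij}=t'_{ij}$ for all $j\in S$; monotone = $g(t_i,U)\le g(t_i,V)$ for $U\subseteq V$; subadditive = $g(t_i,U\cup V)\le g(t_i,U)+g(t_i,V)$. $v_i$ subadditive over independent items means $v_i$ has these three properties. $V_i(t_{ij})=v_i(t_i,\{j\})$. $g$ is $\ell$-Lipschitz if for all $t,t'$ and $X,Y\subseteq[m]$, $|g(t,X)-g(t',Y)|\le\ell(|X\triangle Y|+|\{j\in X\cap Y:t_j\ne t'_j\}|)$. Simultaneous auction $\mathcal A$: $m$ parallel single-item auctions on bids $b_i\in(\mathbb R_{\ge0}\cup\{\perp\})^m$, per-item allocation $X_i^{(j)}(b^{(j)})\subseteq\{j\}$ and payment $p_i^{(j)}(b^{(j)})$; $X_i(b)=\bigcup_jX_i^{(j)}$. $s$ is a strategy profile. $\mu_i^{(s)}(t_i,S)=\sup_{q_i\in(\mathbb R_{\ge0}\cup\{\perp\})^m}\mathbb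 E_{t_{-i}\sim D_{-i},b_{-i}\sim s_{-i}(t_{-i})}\big[v_i(t_i,X_i(q_i,b_{-i})\cap S)-\sum_{j\in S}p_i^{(j)}(q_i^{(j)},b_{-i}^{(j)})\big]$. Condition (1): per-item payments are nonnegative and bidding $\perp$ on an item incurs no payment for it. *)

theory Defs
  imports "HOL-Probability.Probability"
begin

(* Bidders are 0..<n, items are 0..<m.
   A type of bidder k is a function t :: nat => 'ty (item j |-> t j = t_kj).
   A bid vector of one bidder is nat => real option (None = bottom).
   A bid profile is nat => nat => real option (bidder => item => bid).
   Per-item auction of item j: alloc j k c says bidder k wins item j given the
   bids c :: nat => real option on item j of all bidders; pay j k c is the
   payment of bidder k in the auction of item j. *)

definition valid_bids :: "(nat \<Rightarrow> real option) set" where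
  "valid_bids = {q. \<forall>j y. q j = Some y \<longrightarrow> 0 \<le> y}"

definition item_bids :: "(nat \<Rightarrow> nat \<Rightarrow> real option) \<Rightarrow> nat \<Rightarrow> (nat \<Rightarrow> real option)" where
  "item_bids b j = (\<lambda>k. b k j)"

definition won :: "(nat \<Rightarrow> nat \<Rightarrow> (nat \<Rightarrow> real option) \<Rightarrow> bool) \<Rightarrow> nat \<Rightarrow> nat
    \<Rightarrow> (nat \<Rightarrow> nat \<Rightarrow> real option) \<Rightarrow> nat set" where
  "won alloc m i b = {j \<in> {..<m}. alloc j i (item_bids b j)}"

(* distribution of b_{-i}: t_{-i} ~ D_{-i} (independent t_kj ~ D k j), b_k ~ s k (t_k);
   bidders outside {..<n}-{i} bid bottom everywhere *)
definition others_bids :: "nat \<Rightarrow> nat \<Rightarrow> nat \<Rightarrow> (nat \<Rightarrow> nat \<Rightarrow> 'ty pmf)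
    \<Rightarrow> (nat \<Rightarrow> (nat \<Rightarrow> 'ty) \<Rightarrow> (nat \<Rightarrow> real option) pmf) \<Rightarrow> (nat \<Rightarrow> nat \<Rightarrow> real option) pmf" where
  "others_bids n m i D s =
     bind_pmf (Pi_pmf ({..<n} - {i}) undefined (\<lambda>k. Pi_pmf {..<m} undefined (\<lambda>j. D k j)))
       (\<lambda>T. Pi_pmf ({..<n} - {i}) (\<lambda>_. None) (\<lambda>k. s k (T k)))"

definition mu :: "nat \<Rightarrow> nat \<Rightarrow> (nat \<Rightarrow> nat \<Rightarrow> 'ty pmf)
    \<Rightarrow> (nat \<Rightarrow> (nat \<Rightarrow> 'ty) \<Rightarrow> (nat \<Rightarrow> real option) pmf)
    \<Rightarrow> (nat \<Rightarrow> (nat \<Rightarrow> 'ty) \<Rightarrow> nat set \<Rightarrow> real)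
    \<Rightarrow> (nat \<Rightarrow> nat \<Rightarrow> (nat \<Rightarrow> real option) \<Rightarrow> bool)
    \<Rightarrow> (nat \<Rightarrow> nat \<Rightarrow> (nat \<Rightarrow> real option) \<Rightarrow> real)
    \<Rightarrow> nat \<Rightarrow> (nat \<Rightarrow> 'ty) \<Rightarrow> nat set \<Rightarrow> real" where
  "mu n m D s v alloc pay i t S =
     (SUP q \<in> valid_bids. measure_pmf.expectation (others_bids n m i D s)
        (\<lambda>B. v i t (won alloc m i (B(i := q)) \<inter> S)
             - (\<Sum>j\<in>S. pay j i (item_bids (B(i := q)) j))))"

(* L_i(t_i) = {j : V_i(t_ij) < l_i}, with V_i(t_ij) = v_i(t_i,{j}) *)
definition low_items :: "nat \<Rightarrow> (nat \<Rightarrow> (nat \<Rightarrow> 'ty) \<Rightarrow> nat set \<Rightarrow> real) \<Rightarrow> real \<Rightarrow> nat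
    \<Rightarrow> (nat \<Rightarrow> 'ty) \<Rightarrow> nat set" where
  "low_items m v l i t = {j \<in> {..<m}. v i t {j} < l}"

definition mu_hat :: "nat \<Rightarrow> nat \<Rightarrow> (nat \<Rightarrow> nat \<Rightarrow> 'ty pmf)
    \<Rightarrow> (nat \<Rightarrow> (nat \<Rightarrow> 'ty) \<Rightarrow> (nat \<Rightarrow> real option) pmf)
    \<Rightarrow> (nat \<Rightarrow> (nat \<Rightarrow> 'ty) \<Rightarrow> nat set \<Rightarrow> real)
    \<Rightarrow> (nat \<Rightarrow> nat \<Rightarrow> (nat \<Rightarrow> real option) \<Rightarrow> bool)
    \<Rightarrow> (nat \<Rightarrow> nat \<Rightarrow> (nat \<Rightarrow> real option) \<Rightarrow> real)
    \<Rightarrow> real \<Rightarrow> nat \<Rightarrow> (nat \<Rightarrow> 'ty) \<Rightarrow> nat set \<Rightarrow> real" where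
  "mu_hat n m D s v alloc pay l i t S = mu n m D s v alloc pay i t (S \<inter> low_items m v l i t)"

definition no_externalities :: "nat \<Rightarrow> ((nat \<Rightarrow> 'ty) \<Rightarrow> nat set \<Rightarrow> real) \<Rightarrow> bool" where
  "no_externalities m g \<longleftrightarrow> (\<forall>t t' S. S \<subseteq> {..<m} \<longrightarrow> (\<forall>j\<in>S. t j = t' j) \<longrightarrow> g t S = g t' S)"

definition monotone_val :: "nat \<Rightarrow> ((nat \<Rightarrow> 'ty) \<Rightarrow> nat set \<Rightarrow> real) \<Rightarrow> bool" where
  "monotone_val m g \<longleftrightarrow> (\<forall>t U V. U \<subseteq> V \<longrightarrow> V \<subseteq> {..<m} \<longrightarrow> g t U \<le> g t V)"

definition subadditive_val :: "nat \<Rightarrow> ((nat \<Rightarrow> 'ty) \<Rightarrow> nat set \<Rightarrow> real) \<Rightarrow> bool" where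
  "subadditive_val m g \<longleftrightarrow> (\<forall>t U V. U \<subseteq> {..<m} \<longrightarrow> V \<subseteq> {..<m} \<longrightarrow> g t (U \<union> V) \<le> g t U + g t V)"

definition lipschitz_val :: "nat \<Rightarrow> real \<Rightarrow> ((nat \<Rightarrow> 'ty) \<Rightarrow> nat set \<Rightarrow> real) \<Rightarrow> bool" where
  "lipschitz_val m l g \<longleftrightarrow> (\<forall>t t' X Y. X \<subseteq> {..<m} \<longrightarrow> Y \<subseteq> {..<m} \<longrightarrow>
      \<bar>g t X - g t' Y\<bar> \<le> l * real (card ((X - Y) \<union> (Y - X)) + card {j \<in> X \<inter> Y. t j \<noteq> t' j}))"

end

theory Submission
  imports Defs
begin

definition FF :: "nat \<Rightarrow> (nat \<Rightarrow> (nat \<Rightarrow> 'ty) \<Rightarrow> nat set \<Rightarrow> real)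
    \<Rightarrow> (nat \<Rightarrow> nat \<Rightarrow> (nat \<Rightarrow> real option) \<Rightarrow> bool)
    \<Rightarrow> (nat \<Rightarrow> nat \<Rightarrow> (nat \<Rightarrow> real option) \<Rightarrow> real)
    \<Rightarrow> nat \<Rightarrow> (nat \<Rightarrow> 'ty) \<Rightarrow> (nat \<Rightarrow> real option) \<Rightarrow> nat set
    \<Rightarrow> (nat \<Rightarrow> nat \<Rightarrow> real option) \<Rightarrow> real" where
  "FF m v alloc pay i t q S B = v i t (won alloc m i (B(i := q)) \<inter> S)
      - (\<Sum>j\<in>S. pay j i (item_bids (B(i := q)) j))"

lemma mu_FF: "mu n m D s v alloc pay i t S =
  (SUP q\<in>valid_bids. measure_pmf.expectation (others_bids n m i D s) (FF m v alloc pay i t q S))"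
  by (simp add: mu_def FF_def[abs_def])

lemma won_sub: "won alloc m i b \<subseteq> {..<m}" by (auto simp: won_def)

lemma none_valid: "(\<lambda>_. None) \<in> valid_bids" by (simp add: valid_bids_def)

context
  fixes n m i :: nat and D :: "nat \<Rightarrow> nat \<Rightarrow> 'ty pmf"
    and s :: "nat \<Rightarrow> (nat \<Rightarrow> 'ty) \<Rightarrow> (nat \<Rightarrow> real option) pmf"
    and v :: "nat \<Rightarrow> (nat \<Rightarrow> 'ty) \<Rightarrow> nat set \<Rightarrow> real"
    and alloc :: "nat \<Rightarrow> nat \<Rightarrow> (nat \<Rightarrow> real option) \<Rightarrow> bool"
    and pay :: "nat \<Rightarrow> nat \<Rightarrow> (nat \<Rightarrow> real option) \<Rightarrow> real"
  assumes pay_nonneg: "\<forall>j k c. 0 \<le> pay j k c"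
    and pay_bot: "\<forall>j k c. c k = None \<longrightarrow> pay j k c = 0"
    and vne: "no_externalities m (v i)" and vmono: "monotone_val m (v i)"
    and vsub: "subadditive_val m (v i)"
    and integrable_pay: "\<forall>q\<in>valid_bids. \<forall>j<m.
          integrable (measure_pmf (others_bids n m i D s)) (\<lambda>B. pay j i (item_bids (B(i := q)) j))"
begin

lemma v_nonneg: assumes "A \<subseteq> {..<m}" shows "0 \<le> v i t A"
proof -
  have "v i t ({} \<union> {}) \<le> v i t {} + v i t {}" using vsub unfolding subadditive_val_def by blast
  hence "0 \<le> v i t {}" by simp
  also have "v i t {} \<le> v i t A" using vmono assms unfolding monotone_val_def by blast
  finally show ?thesis .
qed

lemma v_mono: "U \<subseteq> V \<Longrightarrow> V \<subseteq> {..<m} \<Longrightarrow> v i t U \<le> v i t V"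
  using vmono unfolding monotone_val_def by blast

lemma int_F: assumes q: "q \<in> valid_bids" and S: "S \<subseteq> {..<m}"
  shows "integrable (measure_pmf (others_bids n m i D s)) (FF m v alloc pay i t q S)"
proof -
  have 1: "integrable (measure_pmf (others_bids n m i D s)) (\<lambda>B. v i t (won alloc m i (B(i:=q)) \<inter> S))"
  proof (rule measure_pmf.integrable_const_bound[where B="v i t {..<m}"])
    show "AE B in measure_pmf (others_bids n m i D s). norm (v i t (won alloc m i (B(i:=q)) \<inter> S)) \<le> v i t {..<m}"
    proof (rule AE_I2)
      fix B
      have w: "won alloc m i (B(i:=q)) \<inter> S \<subseteq> {..<m}" using S by auto
      show "norm (v i t (won alloc m i (B(i:=q)) \<inter> S)) \<le> v i t {..<m}"
        using v_nonneg[OF w] v_mono[OF w] by simp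
    qed
  qed simp
  have 2: "integrable (measure_pmf (others_bids n m i D s)) (\<lambda>B. \<Sum>j\<in>S. pay j i (item_bids (B(i := q)) j))"
    apply (rule Bochner_Integration.integrable_sum) using integrable_pay q S by auto
  show ?thesis unfolding FF_def[abs_def] using Bochner_Integration.integrable_diff[OF 1 2] by simp
qed

lemma E_le_v: assumes q: "q \<in> valid_bids" and S: "S \<subseteq> {..<m}"
  shows "measure_pmf.expectation (others_bids n m i D s) (FF m v alloc pay i t q S) \<le> v i t S"
proof -
  have "measure_pmf.expectation (others_bids n m i D s) (FF m v alloc pay i t q S)
      \<le> measure_pmf.expectation (others_bids n m i D s) (\<lambda>_. v i t S)"
  proof (rule integral_mono[OF int_F[OF q S]])
    fix B
    have "v i t (won alloc m i (B(i:=q)) \<inter> S) \<le> v i t S" using S by (intro v_mono) auto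
    moreover have "0 \<le> (\<Sum>j\<in>S. pay j i (item_bids (B(i := q)) j))"
      using pay_nonneg by (intro sum_nonneg) auto
    ultimately show "FF m v alloc pay i t q S B \<le> v i t S" unfolding FF_def by simp
  qed simp
  thus ?thesis by simp
qed

lemma bdd: assumes S: "S \<subseteq> {..<m}"
  shows "bdd_above ((\<lambda>q. measure_pmf.expectation (others_bids n m i D s) (FF m v alloc pay i t q S)) ` valid_bids)"
  using E_le_v[OF _ S] by (intro bdd_aboveI2) auto

lemma E_le_mu: "q \<in> valid_bids \<Longrightarrow> S \<subseteq> {..<m} \<Longrightarrow>
   measure_pmf.expectation (others_bids n m i D s) (FF m v alloc pay i t q S) \<le> mu n m D s v alloc pay i t S"
  unfolding mu_FF by (rule cSUP_upper[OF _ bdd])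

lemma mu_le: assumes "\<And>q. q \<in> valid_bids \<Longrightarrow>
   measure_pmf.expectation (others_bids n m i D s) (FF m v alloc pay i t q S) \<le> c"
  shows "mu n m D s v alloc pay i t S \<le> c"
  unfolding mu_FF using none_valid assms by (intro cSUP_least) auto

lemma mu_le_v: "S \<subseteq> {..<m} \<Longrightarrow> mu n m D s v alloc pay i t S \<le> v i t S"
  by (rule mu_le, rule E_le_v)

lemma item_bids_upd: "q' j = q j \<Longrightarrow> item_bids (B(i:=q')) j = item_bids (B(i:=q)) j"
  by (auto simp: item_bids_def)

lemma mu_mono: assumes UV: "U \<subseteq> V" and V: "V \<subseteq> {..<m}"
  shows "mu n m D s v alloc pay i t U \<le> mu n m D s v alloc pay i t V"
proof (rule mu_le)
  fix q assume q: "q \<in> valid_bids"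
  define q' where "q' = (\<lambda>j. if j \<in> U then q j else None)"
  have q': "q' \<in> valid_bids" using q by (auto simp: valid_bids_def q'_def)
  have U: "U \<subseteq> {..<m}" using UV V by auto
  have "measure_pmf.expectation (others_bids n m i D s) (FF m v alloc pay i t q U)
     \<le> measure_pmf.expectation (others_bids n m i D s) (FF m v alloc pay i t q' V)"
  proof (rule integral_mono[OF int_F[OF q U] int_F[OF q' V]])
    fix B
    have ib: "j \<in> U \<Longrightarrow> item_bids (B(i:=q')) j = item_bids (B(i:=q)) j" for j
      by (rule item_bids_upd) (simp add: q'_def)
    have wU: "won alloc m i (B(i:=q')) \<inter> U = won alloc m i (B(i:=q)) \<inter> U"
      using ib by (auto simp: won_def)
    have "v i t (won alloc m i (B(i:=q)) \<inter> U) \<le> v i t (won alloc m i (B(i:=q')) \<inter> V)"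
      unfolding wU[symmetric] using UV V by (intro v_mono) auto
    moreover have "(\<Sum>j\<in>V. pay j i (item_bids (B(i := q')) j)) = (\<Sum>j\<in>U. pay j i (item_bids (B(i := q)) j))"
    proof -
      have fin: "finite V" using V finite_subset by blast
      have "(\<Sum>j\<in>V. pay j i (item_bids (B(i := q')) j)) =
          (\<Sum>j\<in>U. pay j i (item_bids (B(i := q')) j)) + (\<Sum>j\<in>V-U. pay j i (item_bids (B(i := q')) j))"
        using sum.subset_diff[OF UV fin, where g="\<lambda>j. pay j i (item_bids (B(i := q')) j)"] by linarith
      also have "(\<Sum>j\<in>V-U. pay j i (item_bids (B(i := q')) j)) = 0"
      proof (rule sum.neutral, rule ballI)
        fix j assume j: "j \<in> V - U"
        have "item_bids (B(i := q')) j i = None" using j by (simp add: item_bids_def q'_def)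
        thus "pay j i (item_bids (B(i := q')) j) = 0" using pay_bot by blast
      qed
      also have "(\<Sum>j\<in>U. pay j i (item_bids (B(i := q')) j)) = (\<Sum>j\<in>U. pay j i (item_bids (B(i := q)) j))"
        using ib by (intro sum.cong) auto
      finally show ?thesis by linarith
    qed
    ultimately show "FF m v alloc pay i t q U B \<le> FF m v alloc pay i t q' V B" unfolding FF_def by simp
  qed
  also have "\<dots> \<le> mu n m D s v alloc pay i t V" by (rule E_le_mu[OF q' V])
  finally show "measure_pmf.expectation (others_bids n m i D s) (FF m v alloc pay i t q U)
     \<le> mu n m D s v alloc pay i t V" .
qed

lemma mu_sub0: assumes U: "U \<subseteq> {..<m}" and V: "V \<subseteq> {..<m}"
  shows "mu n m D s v alloc pay i t (U \<union> V) \<le> mu n m D s v alloc pay i t U + mu n m D s v alloc pay i t (V - U)"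
proof (rule mu_le)
  fix q assume q: "q \<in> valid_bids"
  have VU: "V - U \<subseteq> {..<m}" using V by auto
  have UV: "U \<union> V \<subseteq> {..<m}" using U V by auto
  have "measure_pmf.expectation (others_bids n m i D s) (FF m v alloc pay i t q (U \<union> V))
     \<le> measure_pmf.expectation (others_bids n m i D s) (\<lambda>B. FF m v alloc pay i t q U B + FF m v alloc pay i t q (V - U) B)"
  proof (rule integral_mono[OF int_F[OF q UV] Bochner_Integration.integrable_add[OF int_F[OF q U] int_F[OF q VU]]])
    fix B
    let ?w = "won alloc m i (B(i:=q))"
    have e: "?w \<inter> (U \<union> V) = (?w \<inter> U) \<union> (?w \<inter> (V - U))" by auto
    have "v i t (?w \<inter> (U \<union> V)) \<le> v i t (?w \<inter> U) + v i t (?w \<inter> (V - U))"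
    proof -
      have "?w \<inter> U \<subseteq> {..<m}" "?w \<inter> (V - U) \<subseteq> {..<m}" using U V by auto
      thus ?thesis unfolding e using vsub unfolding subadditive_val_def by blast
    qed
    moreover have "(\<Sum>j\<in>U \<union> V. pay j i (item_bids (B(i := q)) j)) =
       (\<Sum>j\<in>U. pay j i (item_bids (B(i := q)) j)) + (\<Sum>j\<in>V - U. pay j i (item_bids (B(i := q)) j))"
    proof -
      have e2: "U \<union> V = U \<union> (V - U)" by auto
      have "finite U" "finite (V - U)" using U VU finite_subset by blast+
      hence "(\<Sum>j\<in>U \<union> (V - U). pay j i (item_bids (B(i := q)) j)) =
       (\<Sum>j\<in>U. pay j i (item_bids (B(i := q)) j)) + (\<Sum>j\<in>V - U. pay j i (item_bids (B(i := q)) j))"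
        by (intro sum.union_disjoint) auto
      thus ?thesis unfolding e2[symmetric] .
    qed
    ultimately show "FF m v alloc pay i t q (U \<union> V) B \<le> FF m v alloc pay i t q U B + FF m v alloc pay i t q (V - U) B"
      unfolding FF_def by simp
  qed
  also have "\<dots> = measure_pmf.expectation (others_bids n m i D s) (FF m v alloc pay i t q U)
      + measure_pmf.expectation (others_bids n m i D s) (FF m v alloc pay i t q (V - U))"
    by (rule Bochner_Integration.integral_add[OF int_F[OF q U] int_F[OF q VU]])
  also have "\<dots> \<le> mu n m D s v alloc pay i t U + mu n m D s v alloc pay i t (V - U)"
    by (intro add_mono E_le_mu q U VU)
  finally show "measure_pmf.expectation (others_bids n m i D s) (FF m v alloc pay i t q (U \<union> V))
     \<le> mu n m D s v alloc pay i t U + mu n m D s v alloc pay i t (V - U)" .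
qed

lemma mu_noext: assumes S: "S \<subseteq> {..<m}" and agree: "\<forall>j\<in>S. t j = t' j"
  shows "mu n m D s v alloc pay i t S = mu n m D s v alloc pay i t' S"
proof -
  have "FF m v alloc pay i t q S = FF m v alloc pay i t' q S" for q
  proof
    fix B
    have "v i t (won alloc m i (B(i:=q)) \<inter> S) = v i t' (won alloc m i (B(i:=q)) \<inter> S)"
    proof -
      have "won alloc m i (B(i:=q)) \<inter> S \<subseteq> {..<m}" using S by auto
      moreover have "\<forall>j\<in>won alloc m i (B(i:=q)) \<inter> S. t j = t' j" using agree by auto
      ultimately show ?thesis using vne unfolding no_externalities_def by blast
    qed
    thus "FF m v alloc pay i t q S B = FF m v alloc pay i t' q S B" unfolding FF_def by simp
  qed
  thus ?thesis unfolding mu_FF by simp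
qed

lemma v_sum: assumes "finite W" "W \<noteq> {}" "W \<subseteq> {..<m}"
  shows "v i t W \<le> (\<Sum>j\<in>W. v i t {j})"
  using assms
proof (induction W rule: finite_ne_induct)
  case (singleton x) then show ?case by simp
next
  case (insert x F)
  have "v i t (insert x F) = v i t ({x} \<union> F)" by simp
  also have "\<dots> \<le> v i t {x} + v i t F"
  proof -
    have "{x} \<subseteq> {..<m}" "F \<subseteq> {..<m}" using insert.prems by auto
    thus ?thesis using vsub unfolding subadditive_val_def by blast
  qed
  also have "v i t F \<le> (\<Sum>j\<in>F. v i t {j})" using insert.IH insert.prems by auto
  also have "v i t {x} + (\<Sum>j\<in>F. v i t {j}) = (\<Sum>j\<in>insert x F. v i t {j})"
    using insert.hyps by (simp add: sum.insert)
  finally show ?case by simp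
qed

lemma mu_low: assumes W: "W \<subseteq> low_items m v l i t" "W \<noteq> {}"
  shows "mu n m D s v alloc pay i t W \<le> l * real (card W)"
proof -
  have Wm: "W \<subseteq> {..<m}" using W by (auto simp: low_items_def)
  have fin: "finite W" using Wm finite_subset by blast
  have "mu n m D s v alloc pay i t W \<le> v i t W" by (rule mu_le_v[OF Wm])
  also have "\<dots> \<le> (\<Sum>j\<in>W. v i t {j})" by (rule v_sum[OF fin W(2) Wm])
  also have "\<dots> \<le> (\<Sum>j\<in>W. l)" using W by (intro sum_mono) (auto simp: low_items_def)
  finally show ?thesis by (simp add: mult.commute)
qed

end

lemma low_agree:
  assumes vne: "no_externalities m (v i)" and S: "S \<subseteq> {..<m}" and ag: "\<forall>j\<in>S. t j = t' j"
  shows "S \<inter> low_items m v l i t = S \<inter> low_items m v l i t'"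
proof -
  have "v i t {j} = v i t' {j}" if j: "j \<in> S" for j
  proof -
    have "{j} \<subseteq> {..<m}" using j S by auto
    moreover have "\<forall>j'\<in>{j}. t j' = t' j'" using j ag by auto
    ultimately show ?thesis using vne unfolding no_externalities_def by blast
  qed
  thus ?thesis by (auto simp: low_items_def)
qed

theorem lemma7:
  fixes n m i :: nat and l :: real
    and D :: "nat \<Rightarrow> nat \<Rightarrow> 'ty pmf"
    and s :: "nat \<Rightarrow> (nat \<Rightarrow> 'ty) \<Rightarrow> (nat \<Rightarrow> real option) pmf"
    and v :: "nat \<Rightarrow> (nat \<Rightarrow> 'ty) \<Rightarrow> nat set \<Rightarrow> real"
    and alloc :: "nat \<Rightarrow> nat \<Rightarrow> (nat \<Rightarrow> real option) \<Rightarrow> bool"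
    and pay :: "nat \<Rightarrow> nat \<Rightarrow> (nat \<Rightarrow> real option) \<Rightarrow> real"
  assumes i: "i < n"
    and l: "0 \<le> l"
    and pay_nonneg: "\<forall>j k c. 0 \<le> pay j k c"
    and pay_bot: "\<forall>j k c. c k = None \<longrightarrow> pay j k c = 0"
    and val: "\<forall>k<n. no_externalities m (v k) \<and> monotone_val m (v k) \<and> subadditive_val m (v k)"
    and integrable_pay: "\<forall>q\<in>valid_bids. \<forall>j<m.
          integrable (measure_pmf (others_bids n m i D s)) (\<lambda>B. pay j i (item_bids (B(i := q)) j))"
  shows "monotone_val m (mu_hat n m D s v alloc pay l i)
       \<and> subadditive_val m (mu_hat n m D s v alloc pay l i)
       \<and> no_externalities m (mu_hat n m D s v alloc pay l i)
       \<and> lipschitz_val m l (mu_hat n m D s v alloc pay l i)"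
proof -
  have vne: "no_externalities m (v i)" and vmono: "monotone_val m (v i)"
    and vsub: "subadditive_val m (v i)" using val i by auto
  note A = pay_nonneg pay_bot vne vmono vsub integrable_pay
  let ?mu = "mu n m D s v alloc pay i"
  let ?L = "low_items m v l i"
    have M: "monotone_val m (mu_hat n m D s v alloc pay l i)"
    unfolding monotone_val_def mu_hat_def
  proof (intro allI impI)
    fix t :: "nat \<Rightarrow> 'ty" and U V assume "U \<subseteq> V" "V \<subseteq> {..<m}"
    thus "?mu t (U \<inter> ?L t) \<le> ?mu t (V \<inter> ?L t)"
      by (intro mu_mono[where v=v and i=i and n=n and m=m and D=D and s=s and pay=pay and alloc=alloc, OF A]) auto
  qed
  have SA: "subadditive_val m (mu_hat n m D s v alloc pay l i)"
    unfolding subadditive_val_def mu_hat_def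
  proof (intro allI impI)
    fix t :: "nat \<Rightarrow> 'ty" and U V assume U: "U \<subseteq> {..<m}" and V: "V \<subseteq> {..<m}"
    have e: "(U \<union> V) \<inter> ?L t = (U \<inter> ?L t) \<union> (V \<inter> ?L t)" by auto
    have "?mu t ((U \<union> V) \<inter> ?L t) \<le> ?mu t (U \<inter> ?L t) + ?mu t (V \<inter> ?L t - U \<inter> ?L t)"
      unfolding e using U V by (intro mu_sub0[where v=v and i=i and n=n and m=m and D=D and s=s and pay=pay and alloc=alloc, OF A]) auto
    also have "?mu t (V \<inter> ?L t - U \<inter> ?L t) \<le> ?mu t (V \<inter> ?L t)"
      using V by (intro mu_mono[where v=v and i=i and n=n and m=m and D=D and s=s and pay=pay and alloc=alloc, OF A]) auto
    finally show "?mu t ((U \<union> V) \<inter> ?L t) \<le> ?mu t (U \<inter> ?L t) + ?mu t (V \<inter> ?L t)" by simp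
  qed
  have NE: "no_externalities m (mu_hat n m D s v alloc pay l i)"
    unfolding no_externalities_def mu_hat_def
  proof (intro allI impI)
    fix t t' :: "nat \<Rightarrow> 'ty" and S assume S: "S \<subseteq> {..<m}" and ag: "\<forall>j\<in>S. t j = t' j"
    have e: "S \<inter> ?L t = S \<inter> ?L t'" by (rule low_agree[where v=v and i=i and l=l, OF vne S ag])
    show "?mu t (S \<inter> ?L t) = ?mu t' (S \<inter> ?L t')"
      unfolding e[symmetric] using S ag by (intro mu_noext[where v=v and i=i and n=n and m=m and D=D and s=s and pay=pay and alloc=alloc, OF A]) auto
  qed
  have one: "?mu t (X \<inter> ?L t) - ?mu t' (Y \<inter> ?L t') \<le> l * real (card (X - {j \<in> X \<inter> Y. t j = t' j}))"
    if X: "X \<subseteq> {..<m}" and Y: "Y \<subseteq> {..<m}" for t t' :: "nat \<Rightarrow> 'ty" and X Y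
  proof -
    define Z where "Z = {j \<in> X \<inter> Y. t j = t' j}"
    define Z' where "Z' = Z \<inter> ?L t"
    define W where "W = X \<inter> ?L t - Z'"
    have Zm: "Z \<subseteq> {..<m}" using X by (auto simp: Z_def)
    have Zag: "\<forall>j\<in>Z. t j = t' j" by (auto simp: Z_def)
    have Z'': "Z' = Z \<inter> ?L t'" unfolding Z'_def by (rule low_agree[where v=v and i=i and l=l, OF vne Zm Zag])
    have XW: "X \<inter> ?L t = Z' \<union> W" by (auto simp: W_def Z'_def Z_def)
    have WX: "W \<subseteq> X - Z" by (auto simp: W_def Z'_def)
    have finX: "finite X" using X finite_subset by blast
    have cW: "real (card W) \<le> real (card (X - Z))" using WX finX by (simp add: card_mono)
    have step1: "?mu t (X \<inter> ?L t) \<le> ?mu t Z' + l * real (card (X - Z))"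
    proof (cases "W = {}")
      case True
      hence "X \<inter> ?L t = Z'" using XW by simp
      thus ?thesis using l by simp
    next
      case False
      have "?mu t (X \<inter> ?L t) \<le> ?mu t Z' + ?mu t (W - Z')"
        unfolding XW using X by (intro mu_sub0[where v=v and i=i and n=n and m=m and D=D and s=s and pay=pay and alloc=alloc, OF A]) (auto simp: Z'_def Z_def W_def)
      also have "W - Z' = W" by (auto simp: W_def)
      also have "?mu t W \<le> l * real (card W)"
        using False by (intro mu_low[where v=v and i=i and n=n and m=m and D=D and s=s and pay=pay and alloc=alloc, OF A]) (auto simp: W_def)
      also have "\<dots> \<le> l * real (card (X - Z))" using cW l by (rule mult_left_mono)
      finally show ?thesis by simp
    qed
    have "?mu t Z' = ?mu t' Z'" using Zm Zag by (intro mu_noext[where v=v and i=i and n=n and m=m and D=D and s=s and pay=pay and alloc=alloc, OF A]) (auto simp: Z'_def)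
    also have "\<dots> \<le> ?mu t' (Y \<inter> ?L t')" using Y by (intro mu_mono[where v=v and i=i and n=n and m=m and D=D and s=s and pay=pay and alloc=alloc, OF A]) (auto simp: Z'' Z_def)
    finally show ?thesis using step1 unfolding Z_def by simp
  qed
  have LP: "lipschitz_val m l (mu_hat n m D s v alloc pay l i)"
    unfolding lipschitz_val_def mu_hat_def
  proof (intro allI impI)
    fix t t' :: "nat \<Rightarrow> 'ty" and X Y assume X: "X \<subseteq> {..<m}" and Y: "Y \<subseteq> {..<m}"
    define K where "K = real (card ((X - Y) \<union> (Y - X)) + card {j \<in> X \<inter> Y. t j \<noteq> t' j})"
    have finX: "finite X" using X finite_subset by blast
    have finY: "finite Y" using Y finite_subset by blast
    have cX: "card (X - {j \<in> X \<inter> Y. t j = t' j}) \<le> card ((X - Y) \<union> (Y - X)) + card {j \<in> X \<inter> Y. t j \<noteq> t' j}"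
    proof -
      have "card (X - {j \<in> X \<inter> Y. t j = t' j}) \<le> card ((X - Y) \<union> {j \<in> X \<inter> Y. t j \<noteq> t' j})"
        using finX by (intro card_mono) auto
      also have "\<dots> \<le> card (X - Y) + card {j \<in> X \<inter> Y. t j \<noteq> t' j}" by (rule card_Un_le)
      also have "card (X - Y) \<le> card ((X - Y) \<union> (Y - X))" using finX finY by (intro card_mono) auto
      finally show ?thesis by simp
    qed
    have cY: "card (Y - {j \<in> Y \<inter> X. t' j = t j}) \<le> card ((X - Y) \<union> (Y - X)) + card {j \<in> X \<inter> Y. t j \<noteq> t' j}"
    proof -
      have "card (Y - {j \<in> Y \<inter> X. t' j = t j}) \<le> card ((Y - X) \<union> {j \<in> X \<inter> Y. t j \<noteq> t' j})"
        using finY by (intro card_mono) auto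
      also have "\<dots> \<le> card (Y - X) + card {j \<in> X \<inter> Y. t j \<noteq> t' j}" by (rule card_Un_le)
      also have "card (Y - X) \<le> card ((X - Y) \<union> (Y - X))" using finX finY by (intro card_mono) auto
      finally show ?thesis by simp
    qed
    have a: "?mu t (X \<inter> ?L t) - ?mu t' (Y \<inter> ?L t') \<le> l * K"
    proof -
      have "real (card (X - {j \<in> X \<inter> Y. t j = t' j})) \<le> K" unfolding K_def using cX by linarith
      hence "l * real (card (X - {j \<in> X \<inter> Y. t j = t' j})) \<le> l * K" using l by (rule mult_left_mono)
      thus ?thesis using one[OF X Y, of t t'] by linarith
    qed
    have b: "?mu t' (Y \<inter> ?L t') - ?mu t (X \<inter> ?L t) \<le> l * K"
    proof -
      have "real (card (Y - {j \<in> Y \<inter> X. t' j = t j})) \<le> K" unfolding K_def using cY by linarith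
      hence "l * real (card (Y - {j \<in> Y \<inter> X. t' j = t j})) \<le> l * K" using l by (rule mult_left_mono)
      thus ?thesis using one[OF Y X, of t' t] by linarith
    qed
    show "\<bar>?mu t (X \<inter> ?L t) - ?mu t' (Y \<inter> ?L t')\<bar> \<le> l * K" using a b by linarith
  qed
  show ?thesis using M SA NE LP by blast
qed

end
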